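(* Let $S=\{(X_m,y_m)\}_{m=1}^T\in\mathcal{S}_T$ with $\operatorname{rank}(X_m)=d-1$ for all $m$, and let $v_m$ be a unit vector spanning $\ker X_m$. Let $\tau$ be any ordering and $k\ge2$. For $i,j\in\{1,\dots,k\}$ let $\theta_{i,j}\in[0,\pi/2]$ satisfy $\cos^2\theta_{i,j}=(v_{\tau(i)}^\top v_{\tau(j)})^2$. Then $$F_{\tau,S}(k)\ge\min_{m}\sigma_{\min}^2(X_m)\,(v_{\tau(1)}^\top w^\star)^2\,\frac1k\Big(\prod_{i=1}^{k-1}\cos^2\theta_{i,i+1}\Big)\sum_{j=1}^{k-1}\big(1-\cos^2\theta_{j,k}\big),$$ where $\sigma_{\min}(X_m)$ is the smallest non-zero singular value of $X_m$.
   Context: Let $d\ge 1$, $T\ge1$. A task is a pair $(X_m,y_m)$ with $X_m\in\mathbb{R}^{n_m\times d}$, $y_m\in\mathbb{R}^{n_m}$ and $\operatorname{rank}(X_m)<d$. $\mathcal{S}_T$ denotes the set of collections $S=\{(X_m,y_m)\}_{m=1}^T$ of $T$ tasks such that $\|X_m\|\le 1$ (spectral norm) for all $m$ and there exists $w\in\mathbb{R}^d$ with $\|w\|\le 1$ and $y_m=X_mw$ for all $m$. Given $S$ and an ordering $\tau:\mathbb{N}^+\to\{1,\dots,T\}$, the iterates are $w_0=0$ and $w_t=w_{t-1}+X_{\tau(t)}^+(y_{\tau(t)}-X_{\tau(t)}w_{t-1})$, with $A^+$ the Moore–Penrose pseudoinverse. The forgetting at iteration $k$ is $F_{\tau,S}(k)=\frac1k\sum_{t=1}^k\|X_{\tau(t)}w_k-y_{\tau(t)}\|^2$.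 $w^\star$ denotes the minimum Euclidean-norm vector with $X_mw^\star=y_m$ for all $m$. *)

theory Defs
  imports "HOL-Analysis.Analysis" "Jordan_Normal_Form.DL_Rank" "Jordan_Normal_Form.Char_Poly"
begin

definition vnorm :: "real vec \<Rightarrow> real" where
  "vnorm x = sqrt (x \<bullet> x)"

definition spec_norm_le :: "real mat \<Rightarrow> real \<Rightarrow> bool" where
  "spec_norm_le A c \<longleftrightarrow> (\<forall>x \<in> carrier_vec (dim_col A). vnorm (A *\<^sub>v x) \<le> c * vnorm x)"

definition mrank :: "real mat \<Rightarrow> nat" where
  "mrank A = vec_space.rank (dim_row A) A"

definition pinv :: "real mat \<Rightarrow> real mat" where
  "pinv A = (THE B. B \<in> carrier_mat (dim_col A) (dim_row A) \<and>
       A * B * A = A \<and> B * A * B = B \<and>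
       transpose_mat (A * B) = A * B \<and> transpose_mat (B * A) = B * A)"

definition sigma_min :: "real mat \<Rightarrow> real" where
  "sigma_min A = sqrt (Min {e. eigenvalue (transpose_mat A * A) e \<and> e \<noteq> 0})"

fun iterate :: "nat \<Rightarrow> (nat \<Rightarrow> real mat) \<Rightarrow> (nat \<Rightarrow> real vec) \<Rightarrow> (nat \<Rightarrow> nat) \<Rightarrow> nat \<Rightarrow> real vec" where
  "iterate d X y \<tau> 0 = 0\<^sub>v d"
| "iterate d X y \<tau> (Suc t) =
     iterate d X y \<tau> t + pinv (X (\<tau> (Suc t))) *\<^sub>v
       (y (\<tau> (Suc t)) - X (\<tau> (Suc t)) *\<^sub>v iterate d X y \<tau> t)"

definition forgetting :: "nat \<Rightarrow> (nat \<Rightarrow> real mat) \<Rightarrow> (nat \<Rightarrow> real vec) \<Rightarrow> (nat \<Rightarrow> nat) \<Rightarrow> nat \<Rightarrow> real" where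
  "forgetting d X y \<tau> k = (1 / real k) * (\<Sum>t = 1..k.
      (vnorm (X (\<tau> t) *\<^sub>v iterate d X y \<tau> k - y (\<tau> t)))^2)"

definition in_S_T :: "nat \<Rightarrow> nat \<Rightarrow> (nat \<Rightarrow> real mat) \<Rightarrow> (nat \<Rightarrow> real vec) \<Rightarrow> bool" where
  "in_S_T d T X y \<longleftrightarrow>
     (\<forall>m \<in> {1..T}. dim_col (X m) = d \<and> y m \<in> carrier_vec (dim_row (X m)) \<and>
                   mrank (X m) < d \<and> spec_norm_le (X m) 1) \<and>
     (\<exists>w \<in> carrier_vec d. vnorm w \<le> 1 \<and> (\<forall>m \<in> {1..T}. y m = X m *\<^sub>v w))"

definition is_min_norm_sol :: "nat \<Rightarrow> nat \<Rightarrow> (nat \<Rightarrow> real mat) \<Rightarrow> (nat \<Rightarrow> real vec) \<Rightarrow> real vec \<Rightarrow> bool" where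
  "is_min_norm_sol d T X y w \<longleftrightarrow> w \<in> carrier_vec d \<and> (\<forall>m \<in> {1..T}. X m *\<^sub>v w = y m) \<and>
     (\<forall>u \<in> carrier_vec d. (\<forall>m \<in> {1..T}. X m *\<^sub>v u = y m) \<longrightarrow> vnorm w \<le> vnorm u)"

end

theory Submission imports Defs begin
lemma massoc: "dim_col A = dim_row B \<Longrightarrow> dim_col B = dim_row C \<Longrightarrow> (A * B) * C = A * (B * (C :: 'a :: comm_semiring_0 mat))"
  by (rule assoc_mult_mat[of A "dim_row A" "dim_col A" B "dim_col B" C "dim_col C"]) auto

lemma tmult: "dim_col A = dim_row B \<Longrightarrow> transpose_mat (A * B) = transpose_mat B * transpose_mat (A :: 'a :: comm_semiring_0 mat)"
  by (rule transpose_mult[of A "dim_row A" "dim_col A" B "dim_col B"]) auto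

lemma mvassoc: "dim_col A = dim_row B \<Longrightarrow> dim_col B = dim_vec x \<Longrightarrow> (A * B) *\<^sub>v x = A *\<^sub>v (B *\<^sub>v (x :: 'a :: comm_semiring_0 vec))"
  by (rule assoc_mult_mat_vec[of A "dim_row A" "dim_col A" B "dim_col B" x]) auto

lemma penrose_unique:
  fixes A B C :: "real mat"
  assumes A: "A \<in> carrier_mat n d" and B: "B \<in> carrier_mat d n" and C: "C \<in> carrier_mat d n"
  and B1: "A * B * A = A" and B2: "B * A * B = B" and B3: "transpose_mat (A * B) = A * B"
  and B4: "transpose_mat (B * A) = B * A"
  and C1: "A * C * A = A" and C2: "C * A * C = C" and C3: "transpose_mat (A * C) = A * C"
  and C4: "transpose_mat (C * A) = C * A"
  shows "B = C"
proof -
  have At: "transpose_mat A = transpose_mat (A * C * A)" using C1 by simp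
  also have "\<dots> = transpose_mat A * transpose_mat (A * C)"
    using A C by (simp add: tmult)
  finally have At1: "transpose_mat A = transpose_mat A * (A * C)" using C3 by simp
  have "transpose_mat (A * B) = transpose_mat B * transpose_mat A"
    using A B by (simp add: tmult)
  also have "\<dots> = transpose_mat B * (transpose_mat A * (A * C))" using At1 by simp
  also have "\<dots> = transpose_mat (A * B) * (A * C)"
    using A B C by (simp add: tmult massoc)
  finally have AB: "A * B = A * B * (A * C)" using B3 by simp
  have eq1: "B = B * A * C"
  proof -
    have "B = B * (A * B)" using B2 A B by (simp add: massoc)
    also have "\<dots> = B * (A * B * (A * C))" using AB by simp
    also have "\<dots> = B * A * B * A * C" using A B C by (simp add: massoc)
    also have "\<dots> = B * A * C" using B2 by simp
    finally show ?thesis .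
  qed
  have At2: "transpose_mat A = transpose_mat (A * B * A)" using B1 by simp
  also have "\<dots> = transpose_mat (B * A) * transpose_mat A"
    using A B by (simp add: tmult massoc)
  finally have At2: "transpose_mat A = B * A * transpose_mat A" using B4 by simp
  have "transpose_mat (C * A) = transpose_mat A * transpose_mat C"
    using A C by (simp add: tmult)
  also have "\<dots> = B * A * transpose_mat A * transpose_mat C" using At2 A B C by simp
  also have "\<dots> = B * A * transpose_mat (C * A)" using A B C by (simp add: tmult massoc)
  finally have CA: "C * A = B * A * (C * A)" using C4 by simp
  have eq2: "C = B * A * C"
  proof -
    have "C = C * A * C" using C2 by simp
    also have "\<dots> = B * A * (C * A) * C" using CA by simp
    also have "\<dots> = B * A * (C * A * C)" using A B C by (simp add: massoc)
    also have "\<dots> = B * A * C" using C2 by simp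
    finally show ?thesis .
  qed
  show ?thesis using eq1 eq2 by simp
qed

lemma mat_eq_vecI:
  assumes A: "A \<in> carrier_mat r c" and B: "B \<in> carrier_mat r c"
  and eq: "\<And>x. x \<in> carrier_vec c \<Longrightarrow> A *\<^sub>v x = B *\<^sub>v (x :: 'a :: semiring_1 vec)"
  shows "A = B"
proof (rule eq_matI)
  fix i j assume i: "i < dim_row B" and j: "j < dim_col B"
  have "(A *\<^sub>v unit_vec c j) $ i = (B *\<^sub>v unit_vec c j) $ i" using eq[of "unit_vec c j"] by simp
  then show "A $$ (i, j) = B $$ (i, j)" using A B i j by simp
qed (use A B in auto)

lemma sp_self_ge0: "(x :: real vec) \<bullet> x \<ge> 0"
  unfolding scalar_prod_def by (rule sum_nonneg) auto

lemma sp_self_eq0: assumes "x \<in> carrier_vec n" "(x :: real vec) \<bullet> x = 0" shows "x = 0\<^sub>v n"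
proof (rule eq_vecI)
  have "\<forall>i\<in>{0..<dim_vec x}. x $ i * x $ i = 0"
    using assms(2) unfolding scalar_prod_def by (subst (asm) sum_nonneg_eq_0_iff) auto
  then show "\<And>i. i < dim_vec (0\<^sub>v n) \<Longrightarrow> x $ i = 0\<^sub>v n $ i" using assms(1) by auto
qed (use assms in auto)

lemma vnorm_sq: "(vnorm x)^2 = x \<bullet> x"
  unfolding vnorm_def using sp_self_ge0[of x] by simp

definition outer :: "nat \<Rightarrow> real vec \<Rightarrow> real mat" where
  "outer d v = mat d d (\<lambda>(i,j). v $ i * v $ j)"

lemma outer_carrier[simp]: "outer d v \<in> carrier_mat d d"
  unfolding outer_def by simp

lemma outer_mult: assumes "v \<in> carrier_vec d" "x \<in> carrier_vec d"
  shows "outer d v *\<^sub>v x = (v \<bullet> x) \<cdot>\<^sub>v v"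
  using assms by (intro eq_vecI) (auto simp: outer_def scalar_prod_def sum_distrib_right intro!: sum.cong)

lemma outer_transpose: "transpose_mat (outer d v) = outer d v"
  by (intro eq_matI) (auto simp: outer_def)

lemma tvm: assumes "A \<in> carrier_mat nr nc" "x \<in> carrier_vec nc" "y \<in> carrier_vec nr"
  shows "y \<bullet> (A *\<^sub>v x) = (transpose_mat A *\<^sub>v y) \<bullet> (x :: real vec)"
  using transpose_vec_mult_scalar[OF assms] by simp


lemma vsub0: "x \<in> carrier_vec n \<Longrightarrow> v \<in> carrier_vec n \<Longrightarrow> x - 0 \<cdot>\<^sub>v v = (x :: real vec)"
  by (intro eq_vecI) auto

lemma mv0: "A \<in> carrier_mat r c \<Longrightarrow> A *\<^sub>v 0\<^sub>v c = (0\<^sub>v r :: real vec)"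
  by (intro eq_vecI) auto

lemma vadd0: "x \<in> carrier_vec n \<Longrightarrow> x + c \<cdot>\<^sub>v 0\<^sub>v n = (x :: real vec)"
  by (intro eq_vecI) auto

lemma pinv_exists:
  fixes X :: "real mat" and v :: "real vec"
  assumes X: "X \<in> carrier_mat n d" and v: "v \<in> carrier_vec d" and vv: "v \<bullet> v = 1"
  and ker: "\<forall>x\<in>carrier_vec d. X *\<^sub>v x = 0\<^sub>v n \<longleftrightarrow> (\<exists>c. x = c \<cdot>\<^sub>v v)"
  shows "\<exists>B. B \<in> carrier_mat d n \<and> X * B * X = X \<and> B * X * B = B \<and>
            transpose_mat (X * B) = X * B \<and> transpose_mat (B * X) = B * X"
proof -
  define W where "W = outer d v"
  have Wc: "W \<in> carrier_mat d d" unfolding W_def by simp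
  have Wx: "W *\<^sub>v x = (v \<bullet> x) \<cdot>\<^sub>v v" if "x \<in> carrier_vec d" for x
    unfolding W_def using outer_mult[OF v that] .
  have "\<exists>c. v = c \<cdot>\<^sub>v v" by (rule exI[of _ 1]) simp
  hence Xv: "X *\<^sub>v v = 0\<^sub>v n" using ker v by blast
  have Xt: "transpose_mat X \<in> carrier_mat d n" using X by simp
  define M where "M = transpose_mat X * X + W"
  have Mc: "M \<in> carrier_mat d d" unfolding M_def using X Wc by simp
  have Mx: "M *\<^sub>v x = transpose_mat X *\<^sub>v (X *\<^sub>v x) + (v \<bullet> x) \<cdot>\<^sub>v v" if x: "x \<in> carrier_vec d" for x
    unfolding M_def using X Wc x Wx[OF x] by (simp add: add_mult_distrib_mat_vec[of _ d d] mvassoc)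
  have inj: "x = 0\<^sub>v d" if x: "x \<in> carrier_vec d" and Mx0: "M *\<^sub>v x = 0\<^sub>v d" for x
  proof -
    have "x \<bullet> (M *\<^sub>v x) = x \<bullet> (transpose_mat X *\<^sub>v (X *\<^sub>v x)) + (v \<bullet> x) * (x \<bullet> v)"
      using Mx[OF x] x v X by (simp add: scalar_prod_add_distrib[of _ d])
    also have "x \<bullet> (transpose_mat X *\<^sub>v (X *\<^sub>v x)) = (X *\<^sub>v x) \<bullet> (X *\<^sub>v x)"
      using tvm[OF Xt, of "X *\<^sub>v x" x] X x by (simp add: comm_scalar_prod[of _ n])
    also have "x \<bullet> v = v \<bullet> x" using x v by (simp add: comm_scalar_prod[of _ d])
    finally have "(X *\<^sub>v x) \<bullet> (X *\<^sub>v x) + (v \<bullet> x)^2 = 0" using Mx0 x by (simp add: power2_eq_square)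
    moreover have "(X *\<^sub>v x) \<bullet> (X *\<^sub>v x) \<ge> 0" by (rule sp_self_ge0)
    moreover have "(v \<bullet> x)^2 \<ge> 0" by simp
    ultimately have a: "(X *\<^sub>v x) \<bullet> (X *\<^sub>v x) = 0" and b: "(v \<bullet> x)^2 = 0"
      by linarith+
    have "X *\<^sub>v x = 0\<^sub>v n" using sp_self_eq0[of "X *\<^sub>v x" n, OF _ a] X x by simp
    then obtain c where c: "x = c \<cdot>\<^sub>v v" using ker x by blast
    have "v \<bullet> x = c" using c v vv by simp
    then show ?thesis using b c v by auto
  qed
  have "det M \<noteq> 0" using det_0_iff_vec_prod_zero_field[OF Mc] inj by auto
  from det_non_zero_imp_unit[OF Mc this, of undefined]
  obtain Mi where Mi: "Mi \<in> carrier_mat d d" and MiM: "Mi * M = 1\<^sub>m d" and MMi: "M * Mi = 1\<^sub>m d"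
    unfolding Units_def ring_mat_def by auto
  have Mt: "transpose_mat M = M"
    unfolding M_def W_def using X by (simp add: transpose_add[of _ d d] tmult outer_transpose)
  have "transpose_mat (M * Mi) = transpose_mat Mi * M" using Mt Mc Mi by (simp add: tmult)
  hence MitM: "transpose_mat Mi * M = 1\<^sub>m d" using MMi by simp
  have Mit: "transpose_mat Mi = Mi"
  proof -
    have "transpose_mat Mi = transpose_mat Mi * (M * Mi)" using MMi Mi by simp
    also have "\<dots> = (transpose_mat Mi * M) * Mi" using Mi Mc by (simp add: massoc)
    finally show ?thesis using MitM Mi by simp
  qed
  have X0: "transpose_mat X *\<^sub>v 0\<^sub>v n = 0\<^sub>v d" using X by (intro eq_vecI) auto
  have Mv: "M *\<^sub>v v = v" using Mx[OF v] Xv vv X X0 v by simp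
  have Miv: "Mi *\<^sub>v v = v"
  proof -
    have "Mi *\<^sub>v (M *\<^sub>v v) = (Mi * M) *\<^sub>v v" using Mi Mc v by (simp add: mvassoc)
    then show ?thesis using Mv MiM v by simp
  qed
  define B where "B = Mi * transpose_mat X"
  have Bc: "B \<in> carrier_mat d n" unfolding B_def using Mi X by simp
  define P where "P = 1\<^sub>m d - W"
  have Pc: "P \<in> carrier_mat d d" unfolding P_def using minus_carrier_mat[OF Wc] by simp
  have Px: "P *\<^sub>v x = x - (v \<bullet> x) \<cdot>\<^sub>v v" if x: "x \<in> carrier_vec d" for x
    unfolding P_def using x Wc Wx[OF x] by (simp add: minus_mult_distrib_mat_vec[of _ d d])
  have BX: "B * X = P"
  proof (rule mat_eq_vecI[of _ d d])
    show "B * X \<in> carrier_mat d d" using Bc X by simp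
    show "P \<in> carrier_mat d d" by (rule Pc)
    fix x :: "real vec" assume x: "x \<in> carrier_vec d"
    have "transpose_mat X *\<^sub>v (X *\<^sub>v x) = M *\<^sub>v x - (v \<bullet> x) \<cdot>\<^sub>v v"
      using Mx[OF x] x X v by auto
    hence "(B * X) *\<^sub>v x = Mi *\<^sub>v (M *\<^sub>v x - (v \<bullet> x) \<cdot>\<^sub>v v)"
      unfolding B_def using Mi X x by (simp add: mvassoc)
    also have "\<dots> = (Mi * M) *\<^sub>v x - (v \<bullet> x) \<cdot>\<^sub>v (Mi *\<^sub>v v)"
      using Mi Mc x v by (simp add: mult_minus_distrib_mat_vec[of _ d d] mult_mat_vec[of _ d d] mvassoc)
    also have "\<dots> = P *\<^sub>v x" using Px[OF x] MiM Miv x by simp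
    finally show "(B * X) *\<^sub>v x = P *\<^sub>v x" .
  qed
  have c1: "X * B * X = X"
  proof (rule mat_eq_vecI[of _ n d])
    show "X * B * X \<in> carrier_mat n d" using X Bc by simp
    show "X \<in> carrier_mat n d" by (rule X)
    fix x :: "real vec" assume x: "x \<in> carrier_vec d"
    have "(X * B * X) *\<^sub>v x = X *\<^sub>v (P *\<^sub>v x)" using BX X Bc x Pc by (simp add: massoc mvassoc)
    also have "\<dots> = X *\<^sub>v x - (v \<bullet> x) \<cdot>\<^sub>v (X *\<^sub>v v)"
      using Px[OF x] X x v by (simp add: mult_minus_distrib_mat_vec[of _ n d] mult_mat_vec[of _ n d])
    also have "\<dots> = X *\<^sub>v x" using Xv X x by (intro eq_vecI) auto
    finally show "(X * B * X) *\<^sub>v x = X *\<^sub>v x" .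
  qed
  have c4: "transpose_mat (B * X) = B * X"
    unfolding BX P_def W_def by (simp add: transpose_minus[of _ d d] outer_transpose)
  have c2: "B * X * B = B"
  proof (rule mat_eq_vecI[of _ d n])
    show "B * X * B \<in> carrier_mat d n" using X Bc by simp
    show "B \<in> carrier_mat d n" by (rule Bc)
    fix z :: "real vec" assume z: "z \<in> carrier_vec n"
    have Bz: "B *\<^sub>v z \<in> carrier_vec d" using Bc z by simp
    have "v \<bullet> (B *\<^sub>v z) = v \<bullet> (Mi *\<^sub>v (transpose_mat X *\<^sub>v z))"
      unfolding B_def using Mi X z by (simp add: mvassoc)
    also have "\<dots> = (Mi *\<^sub>v v) \<bullet> (transpose_mat X *\<^sub>v z)"
      using tvm[OF Mi, of "transpose_mat X *\<^sub>v z" v] Mit Mi X z v by simp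
    also have "\<dots> = v \<bullet> (transpose_mat X *\<^sub>v z)" using Miv by simp
    also have "\<dots> = (transpose_mat X *\<^sub>v z) \<bullet> v" using X z v by (simp add: comm_scalar_prod[of _ d])
    also have "\<dots> = z \<bullet> (X *\<^sub>v v)" using transpose_vec_mult_scalar[OF X v z] .
    also have "\<dots> = 0" using Xv z by simp
    finally have vB: "v \<bullet> (B *\<^sub>v z) = 0" .
    have "(B * X * B) *\<^sub>v z = P *\<^sub>v (B *\<^sub>v z)" using BX X Bc z Pc by (simp add: mvassoc)
    also have "\<dots> = B *\<^sub>v z" using Px[OF Bz] vB Bz v by (simp add: vsub0)
    finally show "(B * X * B) *\<^sub>v z = B *\<^sub>v z" .
  qed
  have c3: "transpose_mat (X * B) = X * B"
    unfolding B_def using X Mi Mit by (simp add: tmult massoc)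
  show ?thesis using Bc c1 c2 c3 c4 by blast
qed

lemma pinv_prop:
  fixes X :: "real mat" and v :: "real vec"
  assumes X: "X \<in> carrier_mat n d" and v: "v \<in> carrier_vec d" and vv: "v \<bullet> v = 1"
  and ker: "\<forall>x\<in>carrier_vec d. X *\<^sub>v x = 0\<^sub>v n \<longleftrightarrow> (\<exists>c. x = c \<cdot>\<^sub>v v)"
  shows "pinv X \<in> carrier_mat d n"
    "\<And>x. x \<in> carrier_vec d \<Longrightarrow> pinv X *\<^sub>v (X *\<^sub>v x) = x - (v \<bullet> x) \<cdot>\<^sub>v v"
proof -
  let ?Q = "\<lambda>B. B \<in> carrier_mat (dim_col X) (dim_row X) \<and>
       X * B * X = X \<and> B * X * B = B \<and>
       transpose_mat (X * B) = X * B \<and> transpose_mat (B * X) = B * X"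
  have ex1: "\<exists>!B. ?Q B"
  proof -
    obtain B where B: "?Q B" using pinv_exists[OF X v vv ker] X by auto
    moreover have "C = B" if "?Q C" for C
      using penrose_unique[of X n d C B] that B X by auto
    ultimately show ?thesis by blast
  qed
  have Q: "?Q (pinv X)" unfolding pinv_def by (rule theI'[OF ex1])
  then show Bc: "pinv X \<in> carrier_mat d n" using X by auto
  define B where "B = pinv X"
  have Bc': "B \<in> carrier_mat d n" using Bc B_def by simp
  have c1: "X * B * X = X" and c4: "transpose_mat (B * X) = B * X" using Q B_def by auto
  have "\<exists>c. v = c \<cdot>\<^sub>v v" by (rule exI[of _ 1]) simp
  hence Xv: "X *\<^sub>v v = 0\<^sub>v n" using ker v by blast
  fix x :: "real vec" assume x: "x \<in> carrier_vec d"
  define p where "p = B *\<^sub>v (X *\<^sub>v x)"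
  have pc: "p \<in> carrier_vec d" unfolding p_def using Bc' X x by simp
  have "X *\<^sub>v p = (X * B * X) *\<^sub>v x" unfolding p_def using X Bc' x by (simp add: mvassoc)
  hence "X *\<^sub>v (x - p) = 0\<^sub>v n" using c1 X x pc by (simp add: mult_minus_distrib_mat_vec[of _ n d])
  then obtain c where c: "x - p = c \<cdot>\<^sub>v v" using ker x pc by auto
  have "v \<bullet> p = v \<bullet> ((B * X) *\<^sub>v x)" unfolding p_def using X Bc' x by (simp add: mvassoc)
  also have "\<dots> = (transpose_mat (B * X) *\<^sub>v v) \<bullet> x" using tvm[of "B * X" d d x v] X Bc' x v by simp
  also have "\<dots> = (B *\<^sub>v (X *\<^sub>v v)) \<bullet> x" using c4 X Bc' v by (simp add: mvassoc)
  also have "\<dots> = 0" using Xv Bc' x mv0[OF Bc'] by simp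
  finally have vp: "v \<bullet> p = 0" .
  have "v \<bullet> (x - p) = v \<bullet> x" using vp x pc v by (simp add: scalar_prod_minus_distrib[of _ d])
  hence "c = v \<bullet> x" using c v vv by simp
  hence cc: "x - p = (v \<bullet> x) \<cdot>\<^sub>v v" using c by simp
  have "p = x - (v \<bullet> x) \<cdot>\<^sub>v v"
  proof (rule eq_vecI)
    fix i assume "i < dim_vec (x - (v \<bullet> x) \<cdot>\<^sub>v v)"
    hence i: "i < d" using v by simp
    have "(x - p) $ i = ((v \<bullet> x) \<cdot>\<^sub>v v) $ i" using cc by simp
    then show "p $ i = (x - (v \<bullet> x) \<cdot>\<^sub>v v) $ i" using i x pc v by simp
  qed (use pc v in simp)
  then show "pinv X *\<^sub>v (X *\<^sub>v x) = x - (v \<bullet> x) \<cdot>\<^sub>v v" unfolding p_def B_def .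
qed

lemma cont_coord: "continuous_on S (\<lambda>x::nat \<Rightarrow> real. x i)"
  by (rule continuous_on_subset[OF continuous_on_product_coordinates]) simp

lemma sphere_min:
  fixes d :: nat and F G :: "(nat \<Rightarrow> real) \<Rightarrow> real"
  assumes F: "continuous_on UNIV F" and G: "continuous_on UNIV G"
  and ex: "\<exists>g. (\<forall>i\<ge>d. g i = 0) \<and> (\<Sum>i<d. (g i)^2) = 1 \<and> G g = 0"
  shows "\<exists>g0. ((\<forall>i\<ge>d. g0 i = 0) \<and> (\<Sum>i<d. (g0 i)^2) = 1 \<and> G g0 = 0) \<and>
    (\<forall>g. (\<forall>i\<ge>d. g i = 0) \<and> (\<Sum>i<d. (g i)^2) = 1 \<and> G g = 0 \<longrightarrow> F g0 \<le> F g)"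
proof -
  define S :: "nat \<Rightarrow> real set" where "S = (\<lambda>i. if i < d then {-1..1} else {0})"
  have "compactin (product_topology (\<lambda>i. euclidean) UNIV) (PiE UNIV S)"
    unfolding compactin_PiE S_def by auto
  hence cB: "compact (PiE UNIV S)" unfolding euclidean_product_topology by simp
  have c1: "closed {g :: nat \<Rightarrow> real. (\<Sum>i<d. (g i)^2) = 1}"
    by (rule closed_Collect_eq) (intro continuous_on_sum continuous_on_power cont_coord continuous_on_const)+
  have c2: "closed {g :: nat \<Rightarrow> real. G g = 0}"
    by (rule closed_Collect_eq) (rule G, rule continuous_on_const)
  define K where "K = PiE UNIV S \<inter> ({g. (\<Sum>i<d. (g i)^2) = 1} \<inter> {g. G g = 0})"
  have cK: "compact K" unfolding K_def using cB c1 c2 by blast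
  have Keq: "g \<in> K \<longleftrightarrow> (\<forall>i\<ge>d. g i = 0) \<and> (\<Sum>i<d. (g i)^2) = 1 \<and> G g = 0" for g
  proof
    assume "g \<in> K" then show "(\<forall>i\<ge>d. g i = 0) \<and> (\<Sum>i<d. (g i)^2) = 1 \<and> G g = 0"
      unfolding K_def S_def by (auto simp: PiE_iff) (metis not_le singletonD)
  next
    assume a: "(\<forall>i\<ge>d. g i = 0) \<and> (\<Sum>i<d. (g i)^2) = 1 \<and> G g = 0"
    have "g i \<in> S i" for i
    proof (cases "i < d")
      case True
      have "(g i)^2 \<le> (\<Sum>j<d. (g j)^2)" using True by (intro member_le_sum) auto
      hence "(g i)^2 \<le> 1" using a by simp
      hence "\<bar>g i\<bar> \<le> 1" by (simp add: abs_square_le_1)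
      then show ?thesis using True unfolding S_def by auto
    next
      case False then show ?thesis using a unfolding S_def by auto
    qed
    then show "g \<in> K" unfolding K_def using a by (auto simp: PiE_iff)
  qed
  have "K \<noteq> {}" using ex Keq by blast
  from continuous_attains_inf[OF cK this continuous_on_subset[OF F]]
  obtain g0 where "g0 \<in> K" "\<forall>g\<in>K. F g0 \<le> F g" by auto
  then show ?thesis using Keq by blast
qed

lemma sq_expand: assumes "a \<in> carrier_vec n" "b \<in> carrier_vec n"
  shows "(a + t \<cdot>\<^sub>v b) \<bullet> (a + t \<cdot>\<^sub>v b) = a \<bullet> a + 2 * t * (a \<bullet> b) + t^2 * (b \<bullet> (b :: real vec))"
proof -
  have "(a + t \<cdot>\<^sub>v b) \<bullet> (a + t \<cdot>\<^sub>v b) = (\<Sum>i\<in>{0..<n}. a$i*a$i + 2*t*(a$i*b$i) + t^2*(b$i*b$i))"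
    unfolding scalar_prod_def using assms by (intro sum.cong) (auto simp: algebra_simps power2_eq_square)
  also have "\<dots> = a \<bullet> a + 2 * t * (a \<bullet> b) + t^2 * (b \<bullet> b)"
    unfolding scalar_prod_def using assms by (simp add: sum.distrib sum_distrib_left)
  finally show ?thesis .
qed

lemma sp_smult_both: "(c \<cdot>\<^sub>v a) \<bullet> (c \<cdot>\<^sub>v a) = c^2 * (a \<bullet> (a :: real vec))"
  unfolding scalar_prod_def by (simp add: sum_distrib_left power2_eq_square algebra_simps)

lemma quad_zero: assumes "\<forall>t::real. 2 * t * b + t^2 * c \<ge> 0" shows "b = 0"
proof (rule ccontr)
  assume b: "b \<noteq> 0"
  define s where "s = 1 / (\<bar>c\<bar> + 1)"
  have s: "s > 0" "s * \<bar>c\<bar> < 1" unfolding s_def by (auto simp: field_simps)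
  have "2 * (- s * b) * b + (- s * b)^2 * c \<ge> 0" using assms by blast
  hence "b^2 * s * (s * c - 2) \<ge> 0" by (simp add: algebra_simps power2_eq_square)
  moreover have "s * c - 2 < 0" using s by (smt (verit) abs_ge_self mult_left_mono)
  moreover have "b^2 * s > 0" using b s by simp
  ultimately show False using mult_pos_neg[of "b^2 * s" "s * c - 2"] by linarith
qed

lemma vec_restrict: "x \<in> carrier_vec d \<Longrightarrow> vec d (\<lambda>i. if i < d then x $ i else 0) = x"
  by (intro eq_vecI) auto

lemma sp_vec: fixes g :: "nat \<Rightarrow> real" shows "(\<forall>i\<ge>d. g i = 0) \<Longrightarrow> vec d g \<bullet> vec d g = (\<Sum>i<d. (g i)^2)"
  unfolding scalar_prod_def lessThan_atLeast0 by (intro sum.cong) (auto simp: power2_eq_square)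

lemma vec_min:
  fixes X :: "real mat" and v :: "real vec"
  assumes X: "X \<in> carrier_mat n d" and v: "v \<in> carrier_vec d"
  and ex: "\<exists>x\<in>carrier_vec d. x \<bullet> x = 1 \<and> v \<bullet> x = 0"
  shows "\<exists>x0\<in>carrier_vec d. x0 \<bullet> x0 = 1 \<and> v \<bullet> x0 = 0 \<and>
     (\<forall>x\<in>carrier_vec d. x \<bullet> x = 1 \<and> v \<bullet> x = 0 \<longrightarrow> (X *\<^sub>v x0) \<bullet> (X *\<^sub>v x0) \<le> (X *\<^sub>v x) \<bullet> (X *\<^sub>v x))"
proof -
  define F where "F = (\<lambda>g::nat\<Rightarrow>real. (X *\<^sub>v vec d g) \<bullet> (X *\<^sub>v vec d g))"
  define G where "G = (\<lambda>g::nat\<Rightarrow>real. v \<bullet> vec d g)"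
  have Feq: "F = (\<lambda>g. \<Sum>j\<in>{0..<n}. (\<Sum>i\<in>{0..<d}. X $$ (j,i) * g i) * (\<Sum>i\<in>{0..<d}. X $$ (j,i) * g i))"
    unfolding F_def using X by (intro ext) (simp add: scalar_prod_def row_def)
  have Geq: "G = (\<lambda>g. \<Sum>i\<in>{0..<d}. v $ i * g i)"
    unfolding G_def using v by (intro ext) (simp add: scalar_prod_def)
  have cF: "continuous_on UNIV F" unfolding Feq
    by (intro continuous_on_sum continuous_on_mult continuous_on_const cont_coord)
  have cG: "continuous_on UNIV G" unfolding Geq
    by (intro continuous_on_sum continuous_on_mult continuous_on_const cont_coord)
  obtain x :: "real vec" where x: "x \<in> carrier_vec d" "x \<bullet> x = 1" "v \<bullet> x = 0" using ex by blast
  define gx where "gx = (\<lambda>i. if i < d then x $ i else 0)"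
  have "(\<forall>i\<ge>d. gx i = 0) \<and> (\<Sum>i<d. (gx i)^2) = 1 \<and> G gx = 0"
    using x vec_restrict[OF x(1)] sp_vec[of d gx] unfolding G_def gx_def by auto
  from sphere_min[OF cF cG] this obtain g0 where
    g0: "(\<forall>i\<ge>d. g0 i = 0)" "(\<Sum>i<d. (g0 i)^2) = 1" "G g0 = 0"
    and g0min: "\<forall>g. (\<forall>i\<ge>d. g i = 0) \<and> (\<Sum>i<d. (g i)^2) = 1 \<and> G g = 0 \<longrightarrow> F g0 \<le> F g" by blast
  define x0 where "x0 = vec d g0"
  have x0: "x0 \<in> carrier_vec d" "x0 \<bullet> x0 = 1" "v \<bullet> x0 = 0"
    using g0 sp_vec[of d g0] unfolding x0_def G_def by auto
  have "(X *\<^sub>v x0) \<bullet> (X *\<^sub>v x0) \<le> (X *\<^sub>v y) \<bullet> (X *\<^sub>v y)"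
    if y: "y \<in> carrier_vec d" "y \<bullet> y = 1" "v \<bullet> y = 0" for y :: "real vec"
  proof -
    define gy where "gy = (\<lambda>i. if i < d then y $ i else 0)"
    have "(\<forall>i\<ge>d. gy i = 0) \<and> (\<Sum>i<d. (gy i)^2) = 1 \<and> G gy = 0"
      using y vec_restrict[OF y(1)] sp_vec[of d gy] unfolding G_def gy_def by auto
    then have "F g0 \<le> F gy" using g0min by blast
    then show ?thesis unfolding F_def x0_def gy_def using vec_restrict[OF y(1)] by simp
  qed
  then show ?thesis using x0 by blast
qed

lemma eig_exists:
  fixes X :: "real mat" and v u :: "real vec"
  assumes X: "X \<in> carrier_mat n d" and v: "v \<in> carrier_vec d" and vv: "v \<bullet> v = 1"
  and ker: "\<forall>x\<in>carrier_vec d. X *\<^sub>v x = 0\<^sub>v n \<longleftrightarrow> (\<exists>c. x = c \<cdot>\<^sub>v v)"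
  and u: "u \<in> carrier_vec d" and vu: "v \<bullet> u = 0" and u0: "u \<noteq> 0\<^sub>v d"
  shows "\<exists>e. eigenvalue (transpose_mat X * X) e \<and> e \<noteq> 0 \<and> e * (u \<bullet> u) \<le> (X *\<^sub>v u) \<bullet> (X *\<^sub>v u)"
proof -
  have "\<exists>c. v = c \<cdot>\<^sub>v v" by (rule exI[of _ 1]) simp
  hence Xv: "X *\<^sub>v v = 0\<^sub>v n" using ker v by blast
  define f where "f = (\<lambda>x. (X *\<^sub>v x) \<bullet> (X *\<^sub>v x))"
  have f0: "f x \<ge> 0" for x unfolding f_def by (rule sp_self_ge0)
  have scale: "f (c \<cdot>\<^sub>v x) = c^2 * f x" if x: "x \<in> carrier_vec d" for c and x :: "real vec"
    unfolding f_def using mult_mat_vec[OF X x, of c] sp_smult_both by simp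
  have unit: "\<exists>xn\<in>carrier_vec d. xn \<bullet> xn = 1 \<and> v \<bullet> xn = 0 \<and> f xn = f x / (x \<bullet> x)"
    if x: "x \<in> carrier_vec d" and vx: "v \<bullet> x = 0" and s: "x \<bullet> x > 0" for x :: "real vec"
  proof -
    define xn where "xn = (1 / sqrt (x \<bullet> x)) \<cdot>\<^sub>v x"
    have "xn \<bullet> xn = (1 / sqrt (x \<bullet> x))^2 * (x \<bullet> x)" unfolding xn_def by (rule sp_smult_both)
    also have "\<dots> = 1" using s by (simp add: power_divide)
    finally have "xn \<bullet> xn = 1" .
    moreover have "v \<bullet> xn = 0" unfolding xn_def using vx x v by simp
    moreover have "f xn = f x / (x \<bullet> x)" unfolding xn_def using scale[OF x] s by (simp add: power_divide)
    moreover have "xn \<in> carrier_vec d" unfolding xn_def using x by simp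
    ultimately show ?thesis by blast
  qed
  have uu: "u \<bullet> u > 0" using sp_self_ge0[of u] sp_self_eq0[OF u] u0 by force
  obtain x0 :: "real vec" where x0: "x0 \<in> carrier_vec d" "x0 \<bullet> x0 = 1" "v \<bullet> x0 = 0"
    and x0min: "\<forall>x\<in>carrier_vec d. x \<bullet> x = 1 \<and> v \<bullet> x = 0 \<longrightarrow> f x0 \<le> f x"
    using vec_min[OF X v] unit[OF u vu uu] unfolding f_def by blast
  define \<mu> where "\<mu> = f x0"
  have lowb: "\<mu> * (x \<bullet> x) \<le> f x" if x: "x \<in> carrier_vec d" and vx: "v \<bullet> x = 0" for x :: "real vec"
  proof (cases "x \<bullet> x = 0")
    case True then show ?thesis using f0 by simp
  next
    case False
    hence s: "x \<bullet> x > 0" using sp_self_ge0[of x] by simp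
    obtain xn :: "real vec" where "xn\<in>carrier_vec d" "xn \<bullet> xn = 1" "v \<bullet> xn = 0" "f xn = f x / (x \<bullet> x)"
      using unit[OF x vx s] by blast
    hence "\<mu> \<le> f x / (x \<bullet> x)" using x0min unfolding \<mu>_def by auto
    then show ?thesis using s by (simp add: field_simps)
  qed
  have Xx0: "X *\<^sub>v x0 \<in> carrier_vec n" using X x0 by simp
  have orth: "(X *\<^sub>v x0) \<bullet> (X *\<^sub>v h) = 0"
    if h: "h \<in> carrier_vec d" and vh: "v \<bullet> h = 0" and xh: "x0 \<bullet> h = 0" for h :: "real vec"
  proof -
    define b where "b = (X *\<^sub>v x0) \<bullet> (X *\<^sub>v h)"
    have Xh: "X *\<^sub>v h \<in> carrier_vec n" using X h by simp
    have "2 * t * b + t^2 * (f h - \<mu> * (h \<bullet> h)) \<ge> 0" for t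
    proof -
      define z where "z = x0 + t \<cdot>\<^sub>v h"
      have zc: "z \<in> carrier_vec d" unfolding z_def using x0 h by simp
      have "v \<bullet> z = v \<bullet> x0 + v \<bullet> (t \<cdot>\<^sub>v h)" unfolding z_def using v x0 h
        by (simp add: scalar_prod_add_distrib[of _ d])
      hence vz: "v \<bullet> z = 0" using x0 vh h v by simp
      have zz: "z \<bullet> z = 1 + t^2 * (h \<bullet> h)" unfolding z_def using sq_expand[OF x0(1) h] x0 xh by simp
      have "X *\<^sub>v z = X *\<^sub>v x0 + t \<cdot>\<^sub>v (X *\<^sub>v h)" unfolding z_def using X x0 h
        by (simp add: mult_add_distrib_mat_vec[of _ n d] mult_mat_vec[of _ n d])
      hence fz: "f z = \<mu> + 2 * t * b + t^2 * f h" unfolding f_def \<mu>_def b_def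
        using sq_expand[OF Xx0 Xh] by simp
      have "\<mu> * (z \<bullet> z) \<le> f z" by (rule lowb[OF zc vz])
      then show ?thesis unfolding zz fz by (simp add: algebra_simps)
    qed
    then show ?thesis using quad_zero unfolding b_def by blast
  qed
  define g where "g = transpose_mat X *\<^sub>v (X *\<^sub>v x0)"
  have gc: "g \<in> carrier_vec d" unfolding g_def using X Xx0 by simp
  have gdot: "g \<bullet> y = (X *\<^sub>v x0) \<bullet> (X *\<^sub>v y)" if y: "y \<in> carrier_vec d" for y :: "real vec"
    unfolding g_def using tvm[OF X y Xx0] by simp
  define z where "z = g - \<mu> \<cdot>\<^sub>v x0"
  have zc: "z \<in> carrier_vec d" unfolding z_def using gc x0 by simp
  have x0v: "x0 \<bullet> v = 0" using x0 v comm_scalar_prod[of x0 d v] by simp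
  have "z \<bullet> v = g \<bullet> v - \<mu> * (x0 \<bullet> v)" unfolding z_def using gc x0 v
    by (simp add: minus_scalar_prod_distrib[of _ d])
  also have "g \<bullet> v = 0" using gdot[OF v] Xv Xx0 by simp
  finally have "z \<bullet> v = 0" using x0v by simp
  hence vz: "v \<bullet> z = 0" using zc v comm_scalar_prod[of z d v] by simp
  have "z \<bullet> x0 = g \<bullet> x0 - \<mu> * (x0 \<bullet> x0)" unfolding z_def using gc x0
    by (simp add: minus_scalar_prod_distrib[of _ d])
  hence "z \<bullet> x0 = 0" using gdot[OF x0(1)] x0 unfolding \<mu>_def f_def by simp
  hence x0z: "x0 \<bullet> z = 0" using zc x0 comm_scalar_prod[of z d x0] by simp
  have gz: "g \<bullet> z = 0" using gdot[OF zc] orth[OF zc vz x0z] by simp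
  have "z \<bullet> z = g \<bullet> z - \<mu> * (x0 \<bullet> z)" unfolding z_def using gc x0 zc
    by (simp add: minus_scalar_prod_distrib[of _ d])
  hence "z \<bullet> z = 0" using gz x0z by simp
  hence z0: "z = 0\<^sub>v d" using sp_self_eq0[OF zc] by simp
  have gmu: "g = \<mu> \<cdot>\<^sub>v x0"
  proof (rule eq_vecI)
    fix i assume "i < dim_vec (\<mu> \<cdot>\<^sub>v x0)"
    hence i: "i < d" using x0 by simp
    have "z $ i = 0" using z0 i by simp
    then show "g $ i = (\<mu> \<cdot>\<^sub>v x0) $ i" unfolding z_def using i gc x0 by simp
  qed (use gc x0 in simp)
  have x0nz: "x0 \<noteq> 0\<^sub>v d" using x0 by auto
  have ev: "eigenvector (transpose_mat X * X) x0 \<mu>"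
    unfolding eigenvector_def using x0 x0nz X gmu unfolding g_def by (simp add: mvassoc)
  have mu0: "\<mu> \<noteq> 0"
  proof
    assume "\<mu> = 0"
    hence "X *\<^sub>v x0 = 0\<^sub>v n" using sp_self_eq0[OF Xx0] unfolding \<mu>_def f_def by simp
    then obtain c where c: "x0 = c \<cdot>\<^sub>v v" using ker x0 by blast
    hence "c = 0" using x0(3) v vv by simp
    thus False using c x0 v by simp
  qed
  have "\<mu> * (u \<bullet> u) \<le> f u" by (rule lowb[OF u vu])
  then show ?thesis using ev mu0 unfolding eigenvalue_def f_def by blast
qed

lemma sig_bound:
  fixes Xs :: "nat \<Rightarrow> real mat" and v u :: "real vec"
  assumes m: "m \<in> {1..T}" and X: "Xs m \<in> carrier_mat n d" and v: "v \<in> carrier_vec d" and vv: "v \<bullet> v = 1"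
  and ker: "\<forall>x\<in>carrier_vec d. Xs m *\<^sub>v x = 0\<^sub>v n \<longleftrightarrow> (\<exists>c. x = c \<cdot>\<^sub>v v)"
  and u: "u \<in> carrier_vec d" and vu: "v \<bullet> u = 0"
  shows "Min ((\<lambda>m. (sigma_min (Xs m))^2) ` {1..T}) * (u \<bullet> u) \<le> (Xs m *\<^sub>v u) \<bullet> (Xs m *\<^sub>v u)"
proof (cases "u = 0\<^sub>v d")
  case True then show ?thesis using sp_self_ge0[of "Xs m *\<^sub>v u"] by simp
next
  case False
  let ?X = "Xs m"
  let ?A = "transpose_mat ?X * ?X"
  have Ac: "?A \<in> carrier_mat d d" using X by simp
  obtain e where e: "eigenvalue ?A e" "e \<noteq> 0" and eu: "e * (u \<bullet> u) \<le> (?X *\<^sub>v u) \<bullet> (?X *\<^sub>v u)"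
    using eig_exists[OF X v vv ker u vu False] by blast
  define E where "E = {e. eigenvalue ?A e \<and> e \<noteq> 0}"
  have cp: "char_poly ?A \<noteq> 0" using degree_monic_char_poly[OF Ac] by auto
  have "E \<subseteq> {x. poly (char_poly ?A) x = 0}" unfolding E_def using eigenvalue_root_char_poly[OF Ac] by auto
  hence finE: "finite E" using poly_roots_finite[OF cp] finite_subset by blast
  have eE: "e \<in> E" unfolding E_def using e by simp
  have pos: "x > 0" if "x \<in> E" for x
  proof -
    from that obtain z where z: "eigenvector ?A z x" and x0: "x \<noteq> 0" unfolding E_def eigenvalue_def by auto
    hence zc: "z \<in> carrier_vec d" and z0: "z \<noteq> 0\<^sub>v d" and Az: "?A *\<^sub>v z = x \<cdot>\<^sub>v z"
      unfolding eigenvector_def using X by auto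
    have Xz: "?X *\<^sub>v z \<in> carrier_vec n" using X zc by simp
    have "z \<bullet> (?A *\<^sub>v z) = z \<bullet> (transpose_mat ?X *\<^sub>v (?X *\<^sub>v z))" using X zc by (simp add: mvassoc)
    also have "\<dots> = (?X *\<^sub>v z) \<bullet> (?X *\<^sub>v z)"
      using tvm[of "transpose_mat ?X" d n "?X *\<^sub>v z" z] X zc Xz by simp
    finally have "x * (z \<bullet> z) = (?X *\<^sub>v z) \<bullet> (?X *\<^sub>v z)" using Az zc by simp
    moreover have "z \<bullet> z > 0" using sp_self_ge0[of z] sp_self_eq0[OF zc] z0 by force
    moreover have "(?X *\<^sub>v z) \<bullet> (?X *\<^sub>v z) \<ge> 0" by (rule sp_self_ge0)
    ultimately have "x \<ge> 0" by (metis zero_le_mult_iff not_less)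
    then show ?thesis using x0 by simp
  qed
  define Mn where "Mn = Min E"
  have MnE: "Mn \<in> E" unfolding Mn_def using finE eE by (intro Min_in) auto
  have Mne: "Mn \<le> e" unfolding Mn_def using finE eE by simp
  have Mpos: "Mn > 0" using pos[OF MnE] .
  have sig: "(sigma_min ?X)^2 = Mn" unfolding sigma_min_def Mn_def E_def[symmetric]
    using Mpos unfolding Mn_def by simp
  have "Min ((\<lambda>m. (sigma_min (Xs m))^2) ` {1..T}) \<le> (sigma_min ?X)^2"
    using m by (intro Min_le) auto
  hence "Min ((\<lambda>m. (sigma_min (Xs m))^2) ` {1..T}) \<le> e" using sig Mne by simp
  then show ?thesis using eu sp_self_ge0[of u] by (meson mult_right_mono order_trans)
qed

theorem mainTheorem10:
  fixes d T k :: nat and X :: "nat \<Rightarrow> real mat" and y v :: "nat \<Rightarrow> real vec"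
    and \<tau> :: "nat \<Rightarrow> nat" and \<theta> :: "nat \<Rightarrow> nat \<Rightarrow> real" and wstar :: "real vec"
  assumes "d \<ge> 1" and "T \<ge> 1"
    and S: "in_S_T d T X y"
    and rk: "\<forall>m \<in> {1..T}. mrank (X m) = d - 1"
    and v: "\<forall>m \<in> {1..T}. v m \<in> carrier_vec d \<and> vnorm (v m) = 1 \<and>
              (\<forall>x \<in> carrier_vec d. X m *\<^sub>v x = 0\<^sub>v (dim_row (X m)) \<longleftrightarrow> (\<exists>c. x = c \<cdot>\<^sub>v v m))"
    and tau: "\<forall>t \<ge> 1. \<tau> t \<in> {1..T}"
    and "k \<ge> 2"
    and th: "\<forall>i \<in> {1..k}. \<forall>j \<in> {1..k}. 0 \<le> \<theta> i j \<and> \<theta> i j \<le> pi / 2 \<and>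
              (cos (\<theta> i j))^2 = (v (\<tau> i) \<bullet> v (\<tau> j))^2"
    and ws: "is_min_norm_sol d T X y wstar"
  shows "forgetting d X y \<tau> k \<ge>
    (Min ((\<lambda>m. (sigma_min (X m))^2) ` {1..T})) * (v (\<tau> 1) \<bullet> wstar)^2 * (1 / real k) *
    (\<Prod>i = 1..k-1. (cos (\<theta> i (i+1)))^2) * (\<Sum>j = 1..k-1. 1 - (cos (\<theta> j k))^2)"
proof -
  have k: "k \<ge> 2" by fact
  have S1: "\<forall>m \<in> {1..T}. dim_col (X m) = d \<and> y m \<in> carrier_vec (dim_row (X m)) \<and>
                   mrank (X m) < d \<and> spec_norm_le (X m) 1"
    using S unfolding in_S_T_def by (rule conjunct1)
  have Xc: "X m \<in> carrier_mat (dim_row (X m)) d" if "m \<in> {1..T}" for m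
  proof -
    have "dim_col (X m) = d" using bspec[OF S1 that] by (rule conjunct1)
    then show ?thesis unfolding carrier_mat_def by simp
  qed
  have yc: "y m \<in> carrier_vec (dim_row (X m))" if "m \<in> {1..T}" for m
    using bspec[OF S1 that] by blast
  have vm: "v m \<in> carrier_vec d \<and> vnorm (v m) = 1 \<and>
              (\<forall>x \<in> carrier_vec d. X m *\<^sub>v x = 0\<^sub>v (dim_row (X m)) \<longleftrightarrow> (\<exists>c. x = c \<cdot>\<^sub>v v m))"
    if "m \<in> {1..T}" for m using bspec[OF v that] .
  have vc: "v m \<in> carrier_vec d" if "m \<in> {1..T}" for m using vm[OF that] by (rule conjunct1)
  have vv: "v m \<bullet> v m = 1" if "m \<in> {1..T}" for m
  proof -
    have "vnorm (v m) = 1" using vm[OF that] by blast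
    then show ?thesis using vnorm_sq[of "v m"] by simp
  qed
  have ker: "\<forall>x\<in>carrier_vec d. X m *\<^sub>v x = 0\<^sub>v (dim_row (X m)) \<longleftrightarrow> (\<exists>c. x = c \<cdot>\<^sub>v v m)"
    if "m \<in> {1..T}" for m using vm[OF that] by (elim conjE)
  have ws': "wstar \<in> carrier_vec d \<and> (\<forall>m \<in> {1..T}. X m *\<^sub>v wstar = y m)"
    using ws unfolding is_min_norm_sol_def by (elim conjE) (rule conjI)
  have wc: "wstar \<in> carrier_vec d" using ws' by (rule conjunct1)
  have wy: "X m *\<^sub>v wstar = y m" if "m \<in> {1..T}" for m using ws' that by blast
  define V where "V = (\<lambda>t. v (\<tau> t))"
  define w where "w = (\<lambda>t. iterate d X y \<tau> t)"
  have tauT: "\<tau> t \<in> {1..T}" if "t \<ge> 1" for t using tau that by auto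
  have VcVV: "V t \<in> carrier_vec d" "V t \<bullet> V t = 1" if "t \<ge> 1" for t
    unfolding V_def using vc[OF tauT[OF that]] vv[OF tauT[OF that]] by auto
  have pp: "pinv (X m) \<in> carrier_mat d (dim_row (X m))"
    "\<And>x. x \<in> carrier_vec d \<Longrightarrow> pinv (X m) *\<^sub>v (X m *\<^sub>v x) = x - (v m \<bullet> x) \<cdot>\<^sub>v v m"
    if "m \<in> {1..T}" for m
    using pinv_prop[OF Xc[OF that] vc[OF that] vv[OF that] ker[OF that]] by auto
  have wcar: "w t \<in> carrier_vec d" for t
  proof (induction t)
    case 0 then show ?case unfolding w_def by simp
  next
    case (Suc t)
    have m: "\<tau> (Suc t) \<in> {1..T}" by (rule tauT) simp
    have "dim_row (pinv (X (\<tau> (Suc t)))) = d" by (rule carrier_matD(1)[OF pp(1)[OF m]])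
    then show ?case unfolding w_def carrier_vec_def by simp
  qed
  have step: "w (Suc t) - wstar = (V (Suc t) \<bullet> (w t - wstar)) \<cdot>\<^sub>v V (Suc t)" for t
  proof -
    define m where "m = \<tau> (Suc t)"
    have m: "m \<in> {1..T}" unfolding m_def by (rule tauT) simp
    let ?n = "dim_row (X m)"
    have dw: "wstar - w t \<in> carrier_vec d" using wc wcar by simp
    have "X m *\<^sub>v (wstar - w t) = X m *\<^sub>v wstar - X m *\<^sub>v w t"
      by (rule mult_minus_distrib_mat_vec[OF Xc[OF m] wc wcar])
    hence "y m - X m *\<^sub>v w t = X m *\<^sub>v (wstar - w t)" unfolding wy[OF m] by simp
    hence ws1: "w (Suc t) = w t + ((wstar - w t) - (v m \<bullet> (wstar - w t)) \<cdot>\<^sub>v v m)"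
      unfolding w_def m_def using pp(2)[OF m dw] unfolding w_def m_def by simp
    have sp: "v m \<bullet> (wstar - w t) = - (v m \<bullet> (w t - wstar))"
      using vc[OF m] wc wcar by (simp add: scalar_prod_minus_distrib[of _ d])
    show ?thesis
    proof (rule eq_vecI)
      fix i assume "i < dim_vec ((V (Suc t) \<bullet> (w t - wstar)) \<cdot>\<^sub>v V (Suc t))"
      hence i: "i < d" using VcVV(1)[of "Suc t"] by simp
      show "(w (Suc t) - wstar) $ i = ((V (Suc t) \<bullet> (w t - wstar)) \<cdot>\<^sub>v V (Suc t)) $ i"
        unfolding ws1 using i carrier_vecD[OF wc] carrier_vecD[OF wcar[of t]] carrier_vecD[OF vc[OF m]] sp unfolding V_def m_def[symmetric] by (simp add: algebra_simps)
    qed (use VcVV(1)[of "Suc t"] wc in simp)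
  qed
  define a where "a = (\<lambda>t. V t \<bullet> (w (t - 1) - wstar))"
  have ea: "w t - wstar = a t \<cdot>\<^sub>v V t" if "t \<ge> 1" for t
    using step[of "t - 1"] that unfolding a_def by simp
  have a1: "a 1 = - (V 1 \<bullet> wstar)"
    unfolding a_def w_def using VcVV[of 1] wc by (simp add: scalar_prod_minus_distrib[of _ d])
  have aS: "a (Suc t) = a t * (V t \<bullet> V (Suc t))" if "t \<ge> 1" for t
  proof -
    have "a (Suc t) = V (Suc t) \<bullet> (a t \<cdot>\<^sub>v V t)" unfolding a_def using ea[OF that] unfolding a_def by simp
    also have "\<dots> = a t * (V (Suc t) \<bullet> V t)" using VcVV(1)[of t] VcVV(1)[of "Suc t"] that by simp
    also have "V (Suc t) \<bullet> V t = V t \<bullet> V (Suc t)"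
      using VcVV(1)[of t] VcVV(1)[of "Suc t"] that comm_scalar_prod[of "V t" d] by simp
    finally show ?thesis .
  qed
  have asq: "(a t)^2 = (V 1 \<bullet> wstar)^2 * (\<Prod>i = 1..t-1. (V i \<bullet> V (Suc i))^2)" if "t \<ge> 1" for t
    using that
  proof (induction t rule: dec_induct)
    case base then show ?case using a1 by simp
  next
    case (step t)
    have "{1..Suc t - 1} = insert t {1..t-1}" using step(1) by auto
    hence "(\<Prod>i = 1..Suc t-1. (V i \<bullet> V (Suc i))^2) = (V t \<bullet> V (Suc t))^2 * (\<Prod>i = 1..t-1. (V i \<bullet> V (Suc i))^2)"
      using step(1) by (simp add: prod.insert)
    then show ?case using aS[OF step(1)] step(3) by (simp add: power_mult_distrib)
  qed
  define Mn where "Mn = Min ((\<lambda>m. (sigma_min (X m))^2) ` {1..T})"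
  define trm where "trm = (\<lambda>t. (vnorm (X (\<tau> t) *\<^sub>v w k - y (\<tau> t)))^2)"
  have k1: "k \<ge> 1" using k by simp
  define e where "e = w k - wstar"
  have ec: "e \<in> carrier_vec d" unfolding e_def using wcar wc by simp
  have ee: "e = a k \<cdot>\<^sub>v V k" unfolding e_def using ea[OF k1] .
  have term_eq: "trm t = (X (\<tau> t) *\<^sub>v e) \<bullet> (X (\<tau> t) *\<^sub>v e)" if "t \<ge> 1" for t
  proof -
    have m: "\<tau> t \<in> {1..T}" using tauT[OF that] .
    have "X (\<tau> t) *\<^sub>v e = X (\<tau> t) *\<^sub>v w k - X (\<tau> t) *\<^sub>v wstar"
      unfolding e_def by (rule mult_minus_distrib_mat_vec[OF Xc[OF m] wcar wc])
    hence "X (\<tau> t) *\<^sub>v w k - y (\<tau> t) = X (\<tau> t) *\<^sub>v e" unfolding wy[OF m] by simp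
    then show ?thesis unfolding trm_def by (simp add: vnorm_sq)
  qed
  have term_ge0: "trm t \<ge> 0" for t unfolding trm_def by simp
  have lower: "Mn * ((a k)^2 * (1 - (V t \<bullet> V k)^2)) \<le> trm t" if t: "t \<in> {1..k-1}" for t
  proof -
    have t1: "t \<ge> 1" using t by simp
    have m: "\<tau> t \<in> {1..T}" using tauT[OF t1] .
    let ?Y = "X (\<tau> t)"
    let ?n = "dim_row ?Y"
    have Vt: "V t \<in> carrier_vec d" "V t \<bullet> V t = 1" using VcVV[OF t1] by auto
    have Vk: "V k \<in> carrier_vec d" using VcVV[OF k1] by auto
    define c where "c = V t \<bullet> e"
    define u where "u = e + (- c) \<cdot>\<^sub>v V t"
    have uc: "u \<in> carrier_vec d" unfolding u_def using ec Vt by simp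
    have "V t \<bullet> u = V t \<bullet> e + V t \<bullet> ((- c) \<cdot>\<^sub>v V t)"
      unfolding u_def using ec Vt by (simp add: scalar_prod_add_distrib[of _ d])
    hence vu: "v (\<tau> t) \<bullet> u = 0" using Vt unfolding c_def V_def by simp
    have XV: "?Y *\<^sub>v V t = 0\<^sub>v ?n"
    proof -
      have "\<exists>c. V t = c \<cdot>\<^sub>v v (\<tau> t)" by (rule exI[of _ 1]) (simp add: V_def)
      then show ?thesis using ker[OF m] Vt unfolding V_def by blast
    qed
    have cV: "(- c) \<cdot>\<^sub>v V t \<in> carrier_vec d" using Vt(1) by (simp only: smult_carrier_vec)
    have "?Y *\<^sub>v u = ?Y *\<^sub>v e + ?Y *\<^sub>v ((- c) \<cdot>\<^sub>v V t)"
      unfolding u_def by (rule mult_add_distrib_mat_vec[OF Xc[OF m] ec cV])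
    also have "?Y *\<^sub>v ((- c) \<cdot>\<^sub>v V t) = (- c) \<cdot>\<^sub>v (?Y *\<^sub>v V t)"
      by (rule mult_mat_vec[OF Xc[OF m] Vt(1)])
    also have "?Y *\<^sub>v e + (- c) \<cdot>\<^sub>v (?Y *\<^sub>v V t) = ?Y *\<^sub>v e"
      unfolding XV by (rule vadd0) (rule mult_mat_vec_carrier[OF Xc[OF m] ec])
    finally have Yu: "?Y *\<^sub>v u = ?Y *\<^sub>v e" .
    have ev: "e \<bullet> V t = c" unfolding c_def using ec Vt comm_scalar_prod[of e d "V t"] by simp
    have "u \<bullet> u = e \<bullet> e + 2 * (- c) * (e \<bullet> V t) + (- c)^2 * (V t \<bullet> V t)"
      unfolding u_def by (rule sq_expand[OF ec Vt(1)])
    hence uu: "u \<bullet> u = e \<bullet> e - c^2" using ev Vt by (simp add: power2_eq_square)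
    have "e \<bullet> e = (a k)^2 * (V k \<bullet> V k)" unfolding ee by (rule sp_smult_both)
    hence eee: "e \<bullet> e = (a k)^2" using VcVV[OF k1] by simp
    have "c = a k * (V t \<bullet> V k)" unfolding c_def ee using Vt Vk by simp
    hence "u \<bullet> u = (a k)^2 * (1 - (V t \<bullet> V k)^2)" using uu eee by (simp add: power_mult_distrib algebra_simps)
    moreover have "Mn * (u \<bullet> u) \<le> (?Y *\<^sub>v u) \<bullet> (?Y *\<^sub>v u)"
      unfolding Mn_def by (rule sig_bound[where Xs=X and m="\<tau> t", OF m Xc[OF m] vc[OF m] vv[OF m] ker[OF m] uc vu])
    ultimately show ?thesis using term_eq[OF t1] Yu by simp
  qed
  have "(\<Sum>t = 1..k-1. Mn * ((a k)^2 * (1 - (V t \<bullet> V k)^2))) \<le> (\<Sum>t = 1..k-1. trm t)"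
    using lower by (rule sum_mono)
  also have "\<dots> \<le> (\<Sum>t = 1..k. trm t)"
    using term_ge0 by (intro sum_mono2) auto
  finally have sum_ineq: "(\<Sum>t = 1..k-1. Mn * ((a k)^2 * (1 - (V t \<bullet> V k)^2))) \<le> (\<Sum>t = 1..k. trm t)" .
  have P: "(\<Prod>i = 1..k-1. (cos (\<theta> i (i+1)))^2) = (\<Prod>i = 1..k-1. (V i \<bullet> V (Suc i))^2)"
  proof (rule prod.cong[OF refl])
    fix i assume "i \<in> {1..k-1}"
    hence h: "i \<in> {1..k}" "i+1 \<in> {1..k}" by auto
    show "(cos (\<theta> i (i+1)))^2 = (V i \<bullet> V (Suc i))^2"
      using th[rule_format, OF h] unfolding V_def by simp
  qed
  have Sm: "(\<Sum>j = 1..k-1. 1 - (cos (\<theta> j k))^2) = (\<Sum>j = 1..k-1. 1 - (V j \<bullet> V k)^2)"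
  proof (rule sum.cong[OF refl])
    fix j assume "j \<in> {1..k-1}"
    hence h: "j \<in> {1..k}" "k \<in> {1..k}" using k by auto
    show "1 - (cos (\<theta> j k))^2 = 1 - (V j \<bullet> V k)^2"
      using th[rule_format, OF h] unfolding V_def by simp
  qed
  define Pr where "Pr = (\<Prod>i = 1..k-1. (V i \<bullet> V (Suc i))^2)"
  define Sg where "Sg = (\<Sum>j = 1..k-1. 1 - (V j \<bullet> V k)^2)"
  have sdl: "(\<Sum>t = 1..k-1. Mn * ((a k)^2 * (1 - (V t \<bullet> V k)^2))) = Mn * (a k)^2 * Sg"
    unfolding Sg_def by (simp add: sum_distrib_left mult.assoc)
  have "Mn * (v (\<tau> 1) \<bullet> wstar)^2 * (1 / real k) *
    (\<Prod>i = 1..k-1. (cos (\<theta> i (i+1)))^2) * (\<Sum>j = 1..k-1. 1 - (cos (\<theta> j k))^2)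
    = (1 / real k) * (Mn * ((v (\<tau> 1) \<bullet> wstar)^2 * Pr) * Sg)"
    unfolding P Sm Pr_def[symmetric] Sg_def[symmetric] by (simp add: mult_ac)
  also have "\<dots> = (1 / real k) * (\<Sum>t = 1..k-1. Mn * ((a k)^2 * (1 - (V t \<bullet> V k)^2)))"
    unfolding sdl by (simp add: asq[OF k1] Pr_def V_def)
  also have "\<dots> \<le> (1 / real k) * (\<Sum>t = 1..k. trm t)"
    using sum_ineq by (intro mult_left_mono) auto
  also have "\<dots> = forgetting d X y \<tau> k" unfolding forgetting_def trm_def w_def by simp
  finally show ?thesis unfolding Mn_def .
qed

end
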